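(* (a) $\mathsf{SP_{tot}P}=\mathsf{SPP}$, (b) $\mathsf{WP_{tot}P}=\mathsf{WPP}$, (c) $\mathsf{{C_=}_{tot}P}=\mathsf{C_=P}$, and (d) $\mathsf{P_{tot}P}=\mathsf{PP}$.
   Context: An NPTM is a non-deterministic polynomial-time Turing machine. For an NPTM $M$ and input $x$, $acc_M(x)$, $rej_M(x)$ are the numbers of accepting and rejecting paths of $M$ on $x$, and $tot_M(x)$ is the number of all computation paths of $M$ on $x$ minus $1$. $\mathsf{TotP}=\{tot_M\}$, $\mathsf{GapP}=\{acc_M-rej_M\}$ over all NPTMs $M$; $\mathsf{Gap_{tot}P}$ is the class of differences $g-h$ with $g,h\in\mathsf{TotP}$; $\mathsf{FP}$ is the class of polynomial-time computable functions. For a function class $\mathcal{F}\in\{\mathsf{GapP},\mathsf{Gap_{tot}P}\}$ define: $\mathsf{SPP}$ (resp. $\mathsf{SP_{tot}P}$): languages $L$ with some $f\in\mathsf{GapP}$ (resp. $\mathsf{Gap_{tot}P}$) such that $f(x)=1$ if $x\in L$ and $f(x)=0$ if $x\notin L$. $\mathsf{WPP}$ (resp. $\mathsf{WP_{tot}P}$): languages $L$ with some $f\in\mathsf{GapP}$ (resp. $\mathsf{Gap_{tot}P}$) and some $g\in\mathsf{FP}$ with $0\notin\mathrm{range}(g)$ such that $f(x)=g(x)$ if $x\in L$ and $f(x)=0$ if $x\notin L$. $\mathsf{C_=P}$ (resp. $\mathsf{{C_=}_{tot}P}$): languages $L$ with some $f\in\mathsf{GapP}$ (resp. $\mathsf{Gap_{tot}P}$)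 such that $x\in L\iff f(x)=0$. $\mathsf{PP}$ (resp. $\mathsf{P_{tot}P}$): languages $L$ with some $f\in\mathsf{GapP}$ (resp. $\mathsf{Gap_{tot}P}$) such that $x\in L\iff f(x)>0$. *)

theory Defs
  imports Main
begin

text \<open>Tape symbols are natural numbers below
  nsyms M, with 0 the blank, 1 encoding the input bit 0 (False) and 2 the input bit 1 (True). The transition relation maps a state and
  a scanned symbol to a set of (new state, written symbol, head move) triples; a configuration
  with no applicable transition is halting, and it is accepting iff its state is accepting.\<close>

record ntm =
  nstates :: nat
  nsyms :: nat
  start :: nat
  accepting :: "nat set"
  trans :: "nat \<Rightarrow> nat \<Rightarrow> (nat \<times> nat \<times> int) set"

definition wf_ntm :: "ntm \<Rightarrow> bool" where
  "wf_ntm M \<longleftrightarrow> 3 \<le> nsyms M \<and> start M < nstates M \<and> accepting M \<subseteq> {..<nstates M}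
     \<and> (\<forall>q a. trans M q a \<subseteq> {..<nstates M} \<times> {..<nsyms M} \<times> {-1, 0, 1})
     \<and> (\<forall>q a. (nstates M \<le> q \<or> nsyms M \<le> a) \<longrightarrow> trans M q a = {})"

type_synonym config = "nat \<times> (int \<Rightarrow> nat) \<times> int"

definition init_conf :: "ntm \<Rightarrow> bool list \<Rightarrow> config" where
  "init_conf M x = (start M,
     (\<lambda>i. if 0 \<le> i \<and> i < int (length x) then (if x ! nat i then 2 else 1) else 0), 0)"

definition succs :: "ntm \<Rightarrow> config \<Rightarrow> config set" where
  "succs M c = (case c of (q, tp, h) \<Rightarrow>
     (\<lambda>(q', b, d). (q', tp(h := b), h + d)) ` trans M q (tp h))"

fun halts_within :: "ntm \<Rightarrow> nat \<Rightarrow> config \<Rightarrow> bool" where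
  "halts_within M 0 c = (succs M c = {})"
| "halts_within M (Suc t) c = (\<forall>c'\<in>succs M c. halts_within M t c')"

fun leaves :: "ntm \<Rightarrow> (config \<Rightarrow> bool) \<Rightarrow> nat \<Rightarrow> config \<Rightarrow> nat" where
  "leaves M P 0 c = (if succs M c = {} \<and> P c then 1 else 0)"
| "leaves M P (Suc t) c = (if succs M c = {} then (if P c then 1 else 0)
                           else (\<Sum>c'\<in>succs M c. leaves M P t c'))"

definition run_time :: "ntm \<Rightarrow> bool list \<Rightarrow> nat" where
  "run_time M x = (LEAST t. halts_within M t (init_conf M x))"

definition acc :: "ntm \<Rightarrow> bool list \<Rightarrow> nat" where
  "acc M x = leaves M (\<lambda>(q, _, _). q \<in> accepting M) (run_time M x) (init_conf M x)"

definition rej :: "ntm \<Rightarrow> bool list \<Rightarrow> nat" where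
  "rej M x = leaves M (\<lambda>(q, _, _). q \<notin> accepting M) (run_time M x) (init_conf M x)"

text \<open>tot_M(x): number of computation paths minus one.\<close>
definition tot :: "ntm \<Rightarrow> bool list \<Rightarrow> nat" where
  "tot M x = acc M x + rej M x - 1"

definition poly_bounded :: "(nat \<Rightarrow> nat) \<Rightarrow> bool" where
  "poly_bounded T \<longleftrightarrow> (\<exists>k. \<forall>n. T n \<le> n ^ k + k)"

definition is_nptm :: "ntm \<Rightarrow> bool" where
  "is_nptm M \<longleftrightarrow> wf_ntm M \<and>
     (\<exists>T. poly_bounded T \<and> (\<forall>x. halts_within M (T (length x)) (init_conf M x)))"

definition deterministic :: "ntm \<Rightarrow> bool" where
  "deterministic M \<longleftrightarrow> (\<forall>q a t1 t2. t1 \<in> trans M q a \<longrightarrow> t2 \<in> trans M q a \<longrightarrow> t1 = t2)"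

definition dstep :: "ntm \<Rightarrow> config \<Rightarrow> config" where
  "dstep M c = (if succs M c = {} then c else the_elem (succs M c))"

definition final_conf :: "ntm \<Rightarrow> bool list \<Rightarrow> config" where
  "final_conf M x = (dstep M ^^ run_time M x) (init_conf M x)"

definition output_bits :: "config \<Rightarrow> bool list" where
  "output_bits c = (case c of (q, tp, h) \<Rightarrow>
     map (\<lambda>i. tp (h + int i) = 2) [0..<(LEAST L. tp (h + int L) \<notin> {1, 2})])"

definition nat_of_bits :: "bool list \<Rightarrow> nat" where
  "nat_of_bits bs = foldl (\<lambda>n b. 2 * n + (if b then 1 else 0)) 0 bs"

definition FP :: "(bool list \<Rightarrow> nat) set" where
  "FP = {f. \<exists>M. is_nptm M \<and> deterministic M \<and>
             (\<forall>x. f x = nat_of_bits (output_bits (final_conf M x)))}"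

definition GapP :: "(bool list \<Rightarrow> int) set" where
  "GapP = {(\<lambda>x. int (acc M x) - int (rej M x)) | M. is_nptm M}"

definition TotP :: "(bool list \<Rightarrow> nat) set" where
  "TotP = {tot M | M. is_nptm M}"

definition GapTotP :: "(bool list \<Rightarrow> int) set" where
  "GapTotP = {(\<lambda>x. int (g x) - int (h x)) | g h. g \<in> TotP \<and> h \<in> TotP}"

type_synonym lang = "bool list set"

definition SP_of :: "(bool list \<Rightarrow> int) set \<Rightarrow> lang set" where
  "SP_of F = {L. \<exists>f\<in>F. \<forall>x. (x \<in> L \<longrightarrow> f x = 1) \<and> (x \<notin> L \<longrightarrow> f x = 0)}"

definition WP_of :: "(bool list \<Rightarrow> int) set \<Rightarrow> lang set" where
  "WP_of F = {L. \<exists>f\<in>F. \<exists>g\<in>FP. 0 \<notin> range g \<and>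
                  (\<forall>x. (x \<in> L \<longrightarrow> f x = int (g x)) \<and> (x \<notin> L \<longrightarrow> f x = 0))}"

definition CEq_of :: "(bool list \<Rightarrow> int) set \<Rightarrow> lang set" where
  "CEq_of F = {L. \<exists>f\<in>F. \<forall>x. x \<in> L \<longleftrightarrow> f x = 0}"

definition P_of :: "(bool list \<Rightarrow> int) set \<Rightarrow> lang set" where
  "P_of F = {L. \<exists>f\<in>F. \<forall>x. x \<in> L \<longleftrightarrow> f x > 0}"

definition SPP where "SPP = SP_of GapP"
definition SPtotP where "SPtotP = SP_of GapTotP"
definition WPP where "WPP = WP_of GapP"
definition WPtotP where "WPtotP = WP_of GapTotP"
definition CeqP where "CeqP = CEq_of GapP"
definition CeqtotP where "CeqtotP = CEq_of GapTotP"
definition PP where "PP = P_of GapP"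
definition PtotP where "PtotP = P_of GapTotP"

end

theory Submission
  imports Defs
begin



lemma leaves_halt: "succs M c = {} \<Longrightarrow> leaves M P t c = (if P c then 1 else 0)"
  by (cases t) auto

lemma leaves_split: "leaves M (\<lambda>_. True) t c = leaves M P t c + leaves M (\<lambda>c. \<not> P c) t c"
  by (induction t arbitrary: c) (auto simp: sum.distrib)

lemma halts_mono: "halts_within M t c \<Longrightarrow> t \<le> t' \<Longrightarrow> halts_within M t' c"
proof (induction t arbitrary: c t')
  case 0
  then show ?case by (cases t') auto
next
  case (Suc t)
  then obtain t'' where "t' = Suc t''" "t \<le> t''" by (cases t') auto
  then show ?case using Suc by auto
qed

lemma leaves_stable: "halts_within M t c \<Longrightarrow> t \<le> t' \<Longrightarrow> leaves M P t' c = leaves M P t c"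
proof (induction t arbitrary: c t')
  case 0
  then have "succs M c = {}" by simp
  then show ?case by (simp add: leaves_halt)
next
  case (Suc t)
  from Suc.prems(2) obtain t'' where t'': "t' = Suc t''" "t \<le> t''" by (cases t') auto
  show ?case
  proof (cases "succs M c = {}")
    case True
    then show ?thesis by (simp add: leaves_halt)
  next
    case False
    have h: "\<And>c'. c' \<in> succs M c \<Longrightarrow> halts_within M t c'" using Suc.prems(1) by simp
    have "\<And>c'. c' \<in> succs M c \<Longrightarrow> leaves M P t'' c' = leaves M P t c'"
      using Suc.IH h t''(2) by blast
    then show ?thesis using False t''(1) by (simp cong: sum.cong)
  qed
qed
lemma run_time_le: "halts_within M t (init_conf M x) \<Longrightarrow> run_time M x \<le> t"
  unfolding run_time_def by (rule Least_le)

lemma halts_run_time: "halts_within M t (init_conf M x) \<Longrightarrow> halts_within M (run_time M x) (init_conf M x)"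
  unfolding run_time_def by (rule LeastI)

lemma leaves_run_time: "halts_within M t (init_conf M x) \<Longrightarrow>
   leaves M P (run_time M x) (init_conf M x) = leaves M P t (init_conf M x)"
  by (metis halts_run_time leaves_stable run_time_le)

lemma acc_at: "halts_within M t (init_conf M x) \<Longrightarrow>
   acc M x = leaves M (\<lambda>(q, _, _). q \<in> accepting M) t (init_conf M x)"
  unfolding acc_def by (rule leaves_run_time)

lemma rej_at: "halts_within M t (init_conf M x) \<Longrightarrow>
   rej M x = leaves M (\<lambda>(q, _, _). q \<notin> accepting M) t (init_conf M x)"
  unfolding rej_def by (rule leaves_run_time)

lemma paths_at: "halts_within M t (init_conf M x) \<Longrightarrow>
   acc M x + rej M x = leaves M (\<lambda>_. True) t (init_conf M x)"
  using acc_at[of M t x] rej_at[of M t x]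
    leaves_split[of M t "init_conf M x" "\<lambda>(q, _, _). q \<in> accepting M"]
  by (simp add: case_prod_unfold)

lemma finite_trans: "wf_ntm M \<Longrightarrow> finite (trans M q a)"
proof -
  assume "wf_ntm M"
  then have "trans M q a \<subseteq> {..<nstates M} \<times> {..<nsyms M} \<times> {-1, 0, 1}" unfolding wf_ntm_def by blast
  then show ?thesis by (rule finite_subset) auto
qed
lemma finite_succs: "wf_ntm M \<Longrightarrow> finite (succs M c)"
  unfolding succs_def by (cases c) (simp add: finite_trans)
lemma sum_ge1: "finite A \<Longrightarrow> A \<noteq> {} \<Longrightarrow> (\<And>x. x \<in> A \<Longrightarrow> (1::nat) \<le> f x) \<Longrightarrow> 1 \<le> sum f A"
  by (metis ex_in_conv member_le_sum le_trans zero_le)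
lemma paths_pos: "wf_ntm M \<Longrightarrow> halts_within M t c \<Longrightarrow> 1 \<le> leaves M (\<lambda>_. True) t c"
proof (induction t arbitrary: c)
  case 0
  then show ?case by simp
next
  case (Suc t)
  show ?case
  proof (cases "succs M c = {}")
    case True then show ?thesis by simp
  next
    case False
    have "1 \<le> sum (leaves M (\<lambda>_. True) t) (succs M c)"
      using Suc False by (intro sum_ge1 finite_succs) auto
    then show ?thesis using False by simp
  qed
qed

lemma poly_max: "poly_bounded T1 \<Longrightarrow> poly_bounded T2 \<Longrightarrow> poly_bounded (\<lambda>n. Suc (max (T1 n) (T2 n)))"
proof -
  assume "poly_bounded T1" "poly_bounded T2"
  then obtain k1 k2 where k1: "\<forall>n. T1 n \<le> n ^ k1 + k1" and k2: "\<forall>n. T2 n \<le> n ^ k2 + k2"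
    unfolding poly_bounded_def by blast
  define K where "K = max k1 k2 + 2"
  have "Suc (max (T1 n) (T2 n)) \<le> n ^ K + K" for n
  proof (cases "n = 0")
    case True
    then show ?thesis using k1[rule_format, of 0] k2[rule_format, of 0] by (auto simp: K_def power_0_left split: if_splits)
  next
    case False
    then have "n ^ k1 \<le> n ^ K" "n ^ k2 \<le> n ^ K" unfolding K_def by (intro power_increasing; simp)+
    then show ?thesis using k1[rule_format, of n] k2[rule_format, of n] by (auto simp: K_def)
  qed
  then show ?thesis unfolding poly_bounded_def by blast
qed



definition inv_c :: "ntm \<Rightarrow> config \<Rightarrow> bool" where
  "inv_c M c = (case c of (q, tp, h) \<Rightarrow> q < nstates M \<and> (\<forall>i. tp i < nsyms M))"

lemma succs_mem: "c' \<in> succs M (q, tp, h) \<Longrightarrow> \<exists>q' b d. (q', b, d) \<in> trans M q (tp h) \<and> c' = (q', tp(h := b), h + d)"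
  unfolding succs_def by auto

lemma inv_succs: "wf_ntm M \<Longrightarrow> inv_c M c \<Longrightarrow> c' \<in> succs M c \<Longrightarrow> inv_c M c'"
proof -
  assume wf: "wf_ntm M" and iv: "inv_c M c" and c': "c' \<in> succs M c"
  obtain q tp h where c: "c = (q, tp, h)" by (cases c) auto
  obtain q' b d where t: "(q', b, d) \<in> trans M q (tp h)" and c'eq: "c' = (q', tp(h := b), h + d)"
    using succs_mem[of c' M q tp h] c' c by blast
  have "trans M q (tp h) \<subseteq> {..<nstates M} \<times> {..<nsyms M} \<times> {-1, 0, 1}" using wf unfolding wf_ntm_def by blast
  then have "q' < nstates M" "b < nsyms M" using t by auto
  then show ?thesis using iv c c'eq unfolding inv_c_def by auto
qed

lemma inv_init: "wf_ntm M \<Longrightarrow> inv_c M (init_conf M x)"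
  unfolding inv_c_def init_conf_def wf_ntm_def by auto

definition brM :: "ntm \<Rightarrow> nat set \<Rightarrow> ntm" where
  "brM M S = \<lparr>nstates = nstates M + 2, nsyms = nsyms M, start = start M, accepting = {},
     trans = (\<lambda>q a. if q < nstates M \<and> a < nsyms M then
        (if trans M q a = {} then (if q \<in> S then {(nstates M, a, 0), (Suc (nstates M), a, 0)} else {})
         else trans M q a) else {})\<rparr>"

lemma wf_brM: assumes wf: "wf_ntm M" shows "wf_ntm (brM M S)"
proof -
  have A: "trans M q a \<subseteq> {..<nstates M} \<times> {..<nsyms M} \<times> {-1, 0, 1}" for q a
    using wf unfolding wf_ntm_def by blast
  have "trans (brM M S) q a \<subseteq> {..<nstates (brM M S)} \<times> {..<nsyms (brM M S)} \<times> {-1, 0, 1}" for q a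
  proof -
    have "trans M q a \<subseteq> {..<nstates (brM M S)} \<times> {..<nsyms (brM M S)} \<times> {-1, 0, 1}"
      using A[of q a] by (auto simp: brM_def)
    then show ?thesis by (auto simp: brM_def)
  qed
  then show ?thesis using wf unfolding wf_ntm_def by (auto simp: brM_def)
qed

lemma init_brM: "init_conf (brM M S) x = init_conf M x"
  unfolding init_conf_def brM_def by simp

lemma succs_brM_high: "nstates M \<le> q \<Longrightarrow> succs (brM M S) (q, tp, h) = {}"
  unfolding succs_def brM_def by simp

lemma succs_brM_run: "inv_c M (q, tp, h) \<Longrightarrow> succs M (q, tp, h) \<noteq> {} \<Longrightarrow>
    succs (brM M S) (q, tp, h) = succs M (q, tp, h)"
  unfolding succs_def brM_def inv_c_def by auto

lemma succs_brM_S: "inv_c M (q, tp, h) \<Longrightarrow> succs M (q, tp, h) = {} \<Longrightarrow> q \<in> S \<Longrightarrow>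
    succs (brM M S) (q, tp, h) = {(nstates M, tp, h), (Suc (nstates M), tp, h)}"
  unfolding succs_def brM_def inv_c_def by auto

lemma succs_brM_nS: "inv_c M (q, tp, h) \<Longrightarrow> succs M (q, tp, h) = {} \<Longrightarrow> q \<notin> S \<Longrightarrow>
    succs (brM M S) (q, tp, h) = {}"
  unfolding succs_def brM_def inv_c_def by auto

lemma halts_halt: "succs M c = {} \<Longrightarrow> halts_within M t c"
  by (cases t) auto

lemma brM_leaf:
  assumes "inv_c M (q, tp, h)" "succs M (q, tp, h) = {}"
  shows "leaves (brM M S) (\<lambda>_. True) (Suc t) (q, tp, h) = 1 + (if q \<in> S then 1 else 0)
       \<and> halts_within (brM M S) (Suc t) (q, tp, h)"
proof (cases "q \<in> S")
  case True
  have d: "(nstates M, tp, h) \<noteq> (Suc (nstates M), tp, h)" by simp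
  show ?thesis using True succs_brM_S[OF assms True] d
    by (simp add: leaves_halt succs_brM_high halts_halt)
next
  case False
  then show ?thesis using succs_brM_nS[OF assms False] by simp
qed

lemma brM_main:
  assumes wf: "wf_ntm M"
  shows "halts_within M t c \<Longrightarrow> inv_c M c \<Longrightarrow>
    leaves (brM M S) (\<lambda>_. True) (Suc t) c = leaves M (\<lambda>_. True) t c + leaves M (\<lambda>(q, _, _). q \<in> S) t c
    \<and> halts_within (brM M S) (Suc t) c"
proof (induction t arbitrary: c)
  case 0
  obtain q tp h where c: "c = (q, tp, h)" by (cases c) auto
  show ?case using 0 brM_leaf[of M q tp h S 0] c by simp
next
  case (Suc t)
  obtain q tp h where c: "c = (q, tp, h)" by (cases c) auto
  show ?case
  proof (cases "succs M c = {}")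
    case True
    then show ?thesis using Suc.prems brM_leaf[of M q tp h S "Suc t"] c by (simp add: leaves_halt)
  next
    case False
    have e: "succs (brM M S) c = succs M c" using succs_brM_run[of M q tp h S] Suc.prems False c by simp
    have IH: "\<And>c'. c' \<in> succs M c \<Longrightarrow> leaves (brM M S) (\<lambda>_. True) (Suc t) c' = leaves M (\<lambda>_. True) t c' + leaves M (\<lambda>(q, _, _). q \<in> S) t c'
    \<and> halts_within (brM M S) (Suc t) c'"
    proof -
      fix c' assume c': "c' \<in> succs M c"
      have "halts_within M t c'" "inv_c M c'" using c' Suc.prems inv_succs[OF wf] by auto
      then show "?thesis c'" using Suc.IH by blast
    qed
    show ?thesis using False e IH by (simp add: sum.distrib case_prod_unfold)
  qed
qed

lemma brM_nptm:
  assumes "is_nptm M"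
  shows "is_nptm (brM M S) \<and> (\<forall>x. int (tot (brM M S) x) = int (acc M x) + int (rej M x)
      + int (leaves M (\<lambda>(q, _, _). q \<in> S) (run_time M x) (init_conf M x)) - 1)"
proof -
  obtain T where wf: "wf_ntm M" and T: "poly_bounded T" and h: "\<And>x. halts_within M (T (length x)) (init_conf M x)"
    using assms unfolding is_nptm_def by blast
  have m: "leaves (brM M S) (\<lambda>_. True) (Suc (T (length x))) (init_conf M x) = leaves M (\<lambda>_. True) (T (length x)) (init_conf M x) + leaves M (\<lambda>(q, _, _). q \<in> S) (T (length x)) (init_conf M x)
    \<and> halts_within (brM M S) (Suc (T (length x))) (init_conf M x)" for x
    using brM_main[OF wf h inv_init[OF wf]] by blast
  have hb: "halts_within (brM M S) (Suc (max (T (length x)) (T (length x)))) (init_conf (brM M S) x)" for x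
    using m[of x] by (simp add: init_brM)
  have nptm: "is_nptm (brM M S)" unfolding is_nptm_def
    using wf_brM[OF wf] poly_max[OF T T] hb by blast
  have "int (tot (brM M S) x) = int (acc M x) + int (rej M x)
      + int (leaves M (\<lambda>(q, _, _). q \<in> S) (run_time M x) (init_conf M x)) - 1" for x
  proof -
    have p1: "acc (brM M S) x + rej (brM M S) x = leaves (brM M S) (\<lambda>_. True) (Suc (T (length x))) (init_conf M x)"
      using paths_at[of "brM M S" "Suc (T (length x))" x] m[of x] by (simp add: init_brM)
    have p2: "acc M x + rej M x = leaves M (\<lambda>_. True) (T (length x)) (init_conf M x)"
      using paths_at[OF h] .
    have p3: "leaves M (\<lambda>(q, _, _). q \<in> S) (run_time M x) (init_conf M x) = leaves M (\<lambda>(q, _, _). q \<in> S) (T (length x)) (init_conf M x)"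
      using leaves_run_time[OF h] .
    have p4: "1 \<le> leaves M (\<lambda>_. True) (T (length x)) (init_conf M x)" using paths_pos[OF wf h] .
    show ?thesis unfolding tot_def using p1 p2 p3 p4 m[of x] by simp
  qed
  then show ?thesis using nptm by blast
qed

lemma GapP_sub: "GapP \<subseteq> GapTotP"
proof
  fix f assume "f \<in> GapP"
  then obtain M where M: "is_nptm M" and f: "f = (\<lambda>x. int (acc M x) - int (rej M x))" unfolding GapP_def by blast
  let ?A = "accepting M" and ?R = "- accepting M"
  have a: "is_nptm (brM M ?A)" "\<And>x. int (tot (brM M ?A) x) = int (acc M x) + int (rej M x) + int (acc M x) - 1"
    using brM_nptm[OF M, of ?A] unfolding acc_def by auto
  have r: "is_nptm (brM M ?R)" "\<And>x. int (tot (brM M ?R) x) = int (acc M x) + int (rej M x) + int (rej M x) - 1"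
    using brM_nptm[OF M, of ?R] unfolding rej_def by auto
  have "f = (\<lambda>x. int (tot (brM M ?A) x) - int (tot (brM M ?R) x))" using a r f by auto
  then show "f \<in> GapTotP" unfolding GapTotP_def TotP_def using a r by blast
qed



definition unM :: "ntm \<Rightarrow> ntm \<Rightarrow> ntm" where
  "unM M1 M2 = \<lparr>nstates = Suc (nstates M1 + nstates M2), nsyms = max (nsyms M1) (nsyms M2), start = 0,
     accepting = {q. 0 < q \<and> q \<le> nstates M1},
     trans = (\<lambda>q a. if q = 0 then (if a < max (nsyms M1) (nsyms M2)
          then {(Suc (start M1), a, 0), (Suc (nstates M1 + start M2), a, 0)} else {})
        else if q \<le> nstates M1 then (\<lambda>(p, b, d). (Suc p, b, d)) ` trans M1 (q - 1) a
        else (\<lambda>(p, b, d). (Suc (nstates M1 + p), b, d)) ` trans M2 (q - Suc (nstates M1)) a)\<rparr>"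

lemma wf_unM: assumes "wf_ntm M1" "wf_ntm M2" shows "wf_ntm (unM M1 M2)"
proof -
  have A: "trans M1 q a \<subseteq> {..<nstates M1} \<times> {..<nsyms M1} \<times> {-1, 0, 1}"
    "trans M2 q a \<subseteq> {..<nstates M2} \<times> {..<nsyms M2} \<times> {-1, 0, 1}"
    "nstates M1 \<le> q \<or> nsyms M1 \<le> a \<Longrightarrow> trans M1 q a = {}"
    "nstates M2 \<le> q \<or> nsyms M2 \<le> a \<Longrightarrow> trans M2 q a = {}"
    "3 \<le> nsyms M1" "start M1 < nstates M1" "start M2 < nstates M2" for q a
    using assms unfolding wf_ntm_def by blast+
  have t: "trans (unM M1 M2) q a \<subseteq> {..<nstates (unM M1 M2)} \<times> {..<nsyms (unM M1 M2)} \<times> {-1, 0, 1}" for q a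
  proof (cases "q = 0")
    case True then show ?thesis using A by (auto simp: unM_def)
  next
    case False
    show ?thesis
    proof (cases "q \<le> nstates M1")
      case True then show ?thesis using False A(1)[of "q - 1" a] by (auto simp: unM_def)
    next
      case F2: False then show ?thesis using False A(2)[of "q - Suc (nstates M1)" a] by (auto simp: unM_def)
    qed
  qed
  have e: "trans (unM M1 M2) q a = {}" if "nstates (unM M1 M2) \<le> q \<or> nsyms (unM M1 M2) \<le> a" for q a
  proof (cases "q = 0")
    case True then show ?thesis using that by (auto simp: unM_def)
  next
    case False
    show ?thesis
    proof (cases "q \<le> nstates M1")
      case True then show ?thesis using that False A(3)[of "q - 1" a] by (auto simp: unM_def)
    next
      case F2: False
      have "nstates M2 \<le> q - Suc (nstates M1) \<or> nsyms M2 \<le> a" using that F2 by (auto simp: unM_def)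
      then have "trans M2 (q - Suc (nstates M1)) a = {}" using A(4) by blast
      then show ?thesis using False F2 by (simp add: unM_def)
    qed
  qed
  show ?thesis unfolding wf_ntm_def using t e A(5) by (auto simp: unM_def)
qed

definition sh :: "nat \<Rightarrow> config \<Rightarrow> config" where
  "sh k c = (k + fst c, snd c)"

lemma sh_inj: "inj (sh k)"
  unfolding inj_def sh_def by (auto simp: prod_eq_iff)

lemma succs_un1: "q < nstates M1 \<Longrightarrow>
  succs (unM M1 M2) (Suc q, tp, h) = sh 1 ` succs M1 (q, tp, h)"
  unfolding succs_def unM_def sh_def by (auto simp: image_image case_prod_unfold)

lemma succs_un2: "succs (unM M1 M2) (Suc (nstates M1 + q), tp, h) = sh (Suc (nstates M1)) ` succs M2 (q, tp, h)"
  unfolding succs_def unM_def sh_def by (auto simp: image_image case_prod_unfold)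

lemma state_succs: "wf_ntm M \<Longrightarrow> (q', tp', h') \<in> succs M (q, tp, h) \<Longrightarrow> q' < nstates M"
  using inv_succs[of M "(q, tp, h)" "(q', tp', h')"] unfolding inv_c_def
  by (auto dest!: succs_mem simp: wf_ntm_def)

lemma un1:
  assumes wf: "wf_ntm M1" and PQ: "\<And>c. fst c < nstates M1 \<Longrightarrow> P (sh 1 c) = Q c"
  shows "fst c < nstates M1 \<Longrightarrow> leaves (unM M1 M2) P t (sh 1 c) = leaves M1 Q t c
     \<and> (halts_within (unM M1 M2) t (sh 1 c) = halts_within M1 t c)"
proof (induction t arbitrary: c)
  case 0
  obtain q tp h where c: "c = (q, tp, h)" by (cases c) auto
  have s: "sh 1 c = (Suc q, tp, h)" using c by (simp add: sh_def)
  show ?case using PQ[OF 0] succs_un1[of q M1 M2 tp h] 0 c s by simp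
next
  case (Suc t)
  obtain q tp h where c: "c = (q, tp, h)" by (cases c) auto
  have s: "sh 1 c = (Suc q, tp, h)" using c by (simp add: sh_def)
  have q: "q < nstates M1" using Suc.prems c by simp
  have IH: "\<And>c'. c' \<in> succs M1 c \<Longrightarrow> leaves (unM M1 M2) P t (sh 1 c') = leaves M1 Q t c'
     \<and> (halts_within (unM M1 M2) t (sh 1 c') = halts_within M1 t c')"
  proof -
    fix c' assume c': "c' \<in> succs M1 c"
    obtain q' tp' h' where ce: "c' = (q', tp', h')" by (cases c') auto
    have "q' < nstates M1" using state_succs[OF wf] c' ce c by blast
    then show "?thesis c'" using Suc.IH ce by simp
  qed
  have e: "succs (unM M1 M2) (sh 1 c) = sh 1 ` succs M1 c" using succs_un1[OF q] s c by simp
  have sum: "sum (leaves (unM M1 M2) P t) (sh 1 ` succs M1 c) = sum (leaves M1 Q t) (succs M1 c)"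
    using IH by (simp add: sum.reindex[OF inj_on_subset[OF sh_inj subset_UNIV]])
  have hh: "(\<forall>c'\<in>sh 1 ` succs M1 c. halts_within (unM M1 M2) t c') = (\<forall>c'\<in>succs M1 c. halts_within M1 t c')"
    using IH by simp
  show ?case using e sum hh PQ[OF Suc.prems] by simp
qed

lemma un2:
  assumes PQ: "\<And>c. P (sh (Suc (nstates M1)) c) = Q c"
  shows "leaves (unM M1 M2) P t (sh (Suc (nstates M1)) c) = leaves M2 Q t c
     \<and> (halts_within (unM M1 M2) t (sh (Suc (nstates M1)) c) = halts_within M2 t c)"
proof (induction t arbitrary: c)
  case 0
  obtain q tp h where c: "c = (q, tp, h)" by (cases c) auto
  have s: "sh (Suc (nstates M1)) c = (Suc (nstates M1 + q), tp, h)" using c by (simp add: sh_def)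
  show ?case using PQ[of c] succs_un2[of M1 M2 q tp h] c s by simp
next
  case (Suc t)
  obtain q tp h where c: "c = (q, tp, h)" by (cases c) auto
  have s: "sh (Suc (nstates M1)) c = (Suc (nstates M1 + q), tp, h)" using c by (simp add: sh_def)
  have e: "succs (unM M1 M2) (sh (Suc (nstates M1)) c) = sh (Suc (nstates M1)) ` succs M2 c" using succs_un2 s c by simp
  have sum: "sum (leaves (unM M1 M2) P t) (sh (Suc (nstates M1)) ` succs M2 c) = sum (leaves M2 Q t) (succs M2 c)"
    using Suc.IH by (simp add: sum.reindex[OF inj_on_subset[OF sh_inj subset_UNIV]])
  have hh: "(\<forall>c'\<in>sh (Suc (nstates M1)) ` succs M2 c. halts_within (unM M1 M2) t c') = (\<forall>c'\<in>succs M2 c. halts_within M2 t c')"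
    using Suc.IH by simp
  show ?case using e sum hh PQ by simp
qed



lemma leaves_False: "leaves M (\<lambda>_. False) t c = 0"
  by (induction t arbitrary: c) auto

lemma succs_un0: "wf_ntm M1 \<Longrightarrow> tp 0 < 3 \<Longrightarrow>
  succs (unM M1 M2) (0, tp, 0) = {(Suc (start M1), tp, 0), (Suc (nstates M1 + start M2), tp, 0)}"
  unfolding succs_def unM_def wf_ntm_def by auto

lemma unM_nptm:
  assumes M1: "is_nptm M1" and M2: "is_nptm M2"
  shows "is_nptm (unM M1 M2) \<and> (\<forall>x. int (acc (unM M1 M2) x) - int (rej (unM M1 M2) x) = int (tot M1 x) - int (tot M2 x))"
proof -
  obtain T1 where wf1: "wf_ntm M1" and T1: "poly_bounded T1" and h1: "\<And>x. halts_within M1 (T1 (length x)) (init_conf M1 x)"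
    using M1 unfolding is_nptm_def by blast
  obtain T2 where wf2: "wf_ntm M2" and T2: "poly_bounded T2" and h2: "\<And>x. halts_within M2 (T2 (length x)) (init_conf M2 x)"
    using M2 unfolding is_nptm_def by blast
  let ?U = "unM M1 M2"
  define tp where "tp (x::bool list) = (\<lambda>i::int. if 0 \<le> i \<and> i < int (length x) then (if x ! nat i then 2 else 1) else (0::nat))" for x
  define m where "m (x::bool list) = max (T1 (length x)) (T2 (length x))" for x
  have i1: "init_conf M1 x = (start M1, tp x, 0)" for x unfolding init_conf_def tp_def by simp
  have i2: "init_conf M2 x = (start M2, tp x, 0)" for x unfolding init_conf_def tp_def by simp
  have iU: "init_conf ?U x = (0, tp x, 0)" for x unfolding init_conf_def tp_def unM_def by simp
  have s0: "succs ?U (0, tp x, 0) = {(Suc (start M1), tp x, 0), (Suc (nstates M1 + start M2), tp x, 0)}" for x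
    using succs_un0[OF wf1, of "tp x"] by (simp add: tp_def)
  have ne: "(Suc (start M1), tp x, 0) \<noteq> (Suc (nstates M1 + start M2), tp x, 0)" for x
    using wf1 unfolding wf_ntm_def by auto
  have st1: "start M1 < nstates M1" using wf1 unfolding wf_ntm_def by blast
  have hm1: "halts_within M1 (m x) (init_conf M1 x)" for x using h1 halts_mono m_def by (metis max.cobounded1)
  have hm2: "halts_within M2 (m x) (init_conf M2 x)" for x using h2 halts_mono m_def by (metis max.cobounded2)
  have L1: "leaves ?U P t (Suc (start M1), tp x, 0) = leaves M1 Q t (start M1, tp x, 0)
     \<and> (halts_within ?U t (Suc (start M1), tp x, 0) = halts_within M1 t (start M1, tp x, 0))"
    if "\<And>c. fst c < nstates M1 \<Longrightarrow> P (sh 1 c) = Q c" for P Q t x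
    using un1[of M1 P Q "(start M1, tp x, 0)" M2 t, OF wf1 that] st1 by (simp add: sh_def)
  have L2: "leaves ?U P t (Suc (nstates M1 + start M2), tp x, 0) = leaves M2 Q t (start M2, tp x, 0)
     \<and> (halts_within ?U t (Suc (nstates M1 + start M2), tp x, 0) = halts_within M2 t (start M2, tp x, 0))"
    if "\<And>c. P (sh (Suc (nstates M1)) c) = Q c" for P Q t x
    using un2[of P M1 Q M2 t "(start M2, tp x, 0)"] that by (simp add: sh_def)
  have A1: "fst c < nstates M1 \<Longrightarrow> (\<lambda>(q, _, _). q \<in> accepting ?U) (sh 1 c) = True" for c
    by (simp add: sh_def unM_def case_prod_unfold)
  have A2: "(\<lambda>(q, _, _). q \<in> accepting ?U) (sh (Suc (nstates M1)) c) = False" for c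
    by (simp add: sh_def unM_def case_prod_unfold)
  have R1: "fst c < nstates M1 \<Longrightarrow> (\<lambda>(q, _, _). q \<notin> accepting ?U) (sh 1 c) = False" for c
    by (simp add: sh_def unM_def case_prod_unfold)
  have R2: "(\<lambda>(q, _, _). q \<notin> accepting ?U) (sh (Suc (nstates M1)) c) = True" for c
    by (simp add: sh_def unM_def case_prod_unfold)
  have hU: "halts_within ?U (Suc (m x)) (init_conf ?U x)" for x
    using iU[of x] s0[of x] ne[of x] L1[of "\<lambda>_. True" "\<lambda>_. True" "m x" x] L2[of "\<lambda>_. True" "\<lambda>_. True" "m x" x] hm1[of x] hm2[of x] i1[of x] i2[of x]
    by simp
  have hU': "\<forall>x. halts_within ?U ((\<lambda>n. Suc (max (T1 n) (T2 n))) (length x)) (init_conf ?U x)"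
    using hU unfolding m_def by simp
  have nptm: "is_nptm ?U" unfolding is_nptm_def
    using wf_unM[OF wf1 wf2] poly_max[OF T1 T2] hU' by blast
  have "int (acc ?U x) - int (rej ?U x) = int (tot M1 x) - int (tot M2 x)" for x
  proof -
    have a: "acc ?U x = leaves M1 (\<lambda>_. True) (m x) (start M1, tp x, 0)"
    proof -
      have "acc ?U x = leaves ?U (\<lambda>(q, _, _). q \<in> accepting ?U) (Suc (m x)) (0, tp x, 0)"
        using acc_at[OF hU] iU by simp
      also have "\<dots> = leaves M1 (\<lambda>_. True) (m x) (start M1, tp x, 0) + leaves M2 (\<lambda>_. False) (m x) (start M2, tp x, 0)"
        using s0[of x] ne[of x] L1[of "\<lambda>(q, _, _). q \<in> accepting ?U" "\<lambda>_. True" "m x" x, OF A1]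
          L2[of "\<lambda>(q, _, _). q \<in> accepting ?U" "\<lambda>_. False" "m x" x, OF A2]
        by simp
      finally show ?thesis by (simp add: leaves_False)
    qed
    have r: "rej ?U x = leaves M2 (\<lambda>_. True) (m x) (start M2, tp x, 0)"
    proof -
      have "rej ?U x = leaves ?U (\<lambda>(q, _, _). q \<notin> accepting ?U) (Suc (m x)) (0, tp x, 0)"
        using rej_at[OF hU] iU by simp
      also have "\<dots> = leaves M1 (\<lambda>_. False) (m x) (start M1, tp x, 0) + leaves M2 (\<lambda>_. True) (m x) (start M2, tp x, 0)"
        using s0[of x] ne[of x] L1[of "\<lambda>(q, _, _). q \<notin> accepting ?U" "\<lambda>_. False" "m x" x, OF R1]
          L2[of "\<lambda>(q, _, _). q \<notin> accepting ?U" "\<lambda>_. True" "m x" x, OF R2]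
        by simp
      finally show ?thesis by (simp add: leaves_False)
    qed
    have p1: "acc M1 x + rej M1 x = leaves M1 (\<lambda>_. True) (m x) (start M1, tp x, 0)"
      using paths_at[OF hm1] i1 by simp
    have p2: "acc M2 x + rej M2 x = leaves M2 (\<lambda>_. True) (m x) (start M2, tp x, 0)"
      using paths_at[OF hm2] i2 by simp
    have q1: "1 \<le> leaves M1 (\<lambda>_. True) (m x) (start M1, tp x, 0)" using paths_pos[OF wf1 hm1] i1 by simp
    have q2: "1 \<le> leaves M2 (\<lambda>_. True) (m x) (start M2, tp x, 0)" using paths_pos[OF wf2 hm2] i2 by simp
    show ?thesis unfolding tot_def using a r p1 p2 q1 q2 by simp
  qed
  then show ?thesis using nptm by blast
qed

lemma GapTotP_sub: "GapTotP \<subseteq> GapP"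
proof
  fix f assume "f \<in> GapTotP"
  then obtain M1 M2 where M: "is_nptm M1" "is_nptm M2" and f: "f = (\<lambda>x. int (tot M1 x) - int (tot M2 x))"
    unfolding GapTotP_def TotP_def by blast
  have "f = (\<lambda>x. int (acc (unM M1 M2) x) - int (rej (unM M1 M2) x))" using unM_nptm[OF M] f by auto
  then show "f \<in> GapP" unfolding GapP_def using unM_nptm[OF M] by blast
qed

theorem corollary2:
  shows "SPtotP = SPP \<and> WPtotP = WPP \<and> CeqtotP = CeqP \<and> PtotP = PP"
proof -
  have "GapTotP = GapP" using GapP_sub GapTotP_sub by blast
  then show ?thesis unfolding SPtotP_def SPP_def WPtotP_def WPP_def CeqtotP_def CeqP_def PtotP_def PP_def by simp
qed


end
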